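(* Let $p$ be as in the context and $p^*$ the associated dual function. Define for $\xi\in\mathbb R^n\setminus0$ $$\psi(\xi)=p(\xi)\frac{\nabla p(\xi)}{|\nabla p(\xi)|},\qquad \phi(\xi)=|\xi|\,\nabla p^*(\xi).$$ Then $\psi:\mathbb R^n\setminus0\to\mathbb R^n\setminus0$ is a $C^\infty$-diffeomorphism and $\phi=\psi^{-1}$.
   Context: $p\in C^\infty(\mathbb R^n\setminus0)$ ($n\ge2$) is positive, positively homogeneous of degree 1, and the Gaussian curvature of $\Sigma_p=\{p=1\}$ never vanishes. $p^*\in C^\infty(\mathbb R^n\setminus0)$ is the positive, degree-1 positively homogeneous function with $\{p^*=1\}=\{\nabla p(\xi):p(\xi)=1\}$ (equivalently $p^*(\nabla p(\xi))=1$ for $\xi\ne0$; it satisfies $\nabla p^*(\nabla p(\xi))=\xi/p(\xi)$ and $\nabla p(\nabla p^*(\xi))=\xi/p^*(\xi)$). *)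

theory Defs
  imports "HOL-Analysis.Analysis"
begin

text \<open>C-infinity on an open set, for functions between finite-dimensional spaces:
  f is differentiable at every point of S, and every directional-derivative
  function x |-> Df(x) v is again C-infinity on S (greatest such predicate).\<close>
coinductive smooth_on :: "'a::real_normed_vector set \<Rightarrow> ('a \<Rightarrow> 'b::real_normed_vector) \<Rightarrow> bool"
  for S :: "'a set" where
  "\<lbrakk>\<forall>x\<in>S. f differentiable (at x);
    \<forall>v. smooth_on S (\<lambda>x. frechet_derivative f (at x) v)\<rbrakk> \<Longrightarrow> smooth_on S f"

definition diffeo_on :: "'a::real_normed_vector set \<Rightarrow> 'b::real_normed_vector set \<Rightarrow> ('a \<Rightarrow> 'b) \<Rightarrow> bool" where
  "diffeo_on S T f \<longleftrightarrow> bij_betw f S T \<and> smooth_on S f \<and> smooth_on T (inv_into S f)"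

definition grad :: "(real^'n \<Rightarrow> real) \<Rightarrow> real^'n \<Rightarrow> real^'n" where
  "grad f x = (\<chi> i. frechet_derivative f (at x) (axis i 1))"

definition hessian :: "(real^'n \<Rightarrow> real) \<Rightarrow> real^'n \<Rightarrow> real^'n^'n" where
  "hessian f x = (\<chi> i j. frechet_derivative (\<lambda>y. grad f y $ i) (at x) (axis j 1))"

definition pos_homogeneous1 :: "(real^'n \<Rightarrow> real) \<Rightarrow> bool" where
  "pos_homogeneous1 f \<longleftrightarrow> (\<forall>t>0. \<forall>x. x \<noteq> 0 \<longrightarrow> f (t *\<^sub>R x) = t * f x)"

text \<open>Gaussian curvature of the level set {F = c} at a regular point x
  (bordered-Hessian formula for implicitly defined hypersurfaces in R^n):
  K = - det [[Hess F, grad F],[grad F^T, 0]] / |grad F|^(n+1).\<close>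
definition bordered_hessian :: "(real^'n \<Rightarrow> real) \<Rightarrow> real^'n \<Rightarrow> real^('n option)^('n option)" where
  "bordered_hessian F x = (\<chi> a b. case (a, b) of
      (Some i, Some j) \<Rightarrow> hessian F x $ i $ j
    | (Some i, None) \<Rightarrow> grad F x $ i
    | (None, Some j) \<Rightarrow> grad F x $ j
    | (None, None) \<Rightarrow> 0)"

definition level_gauss_curvature :: "(real^'n \<Rightarrow> real) \<Rightarrow> real^'n \<Rightarrow> real" where
  "level_gauss_curvature F x = - det (bordered_hessian F x) / norm (grad F x) ^ (CARD('n) + 1)"

end

theory Submission
  imports Defs
begin


lemma smooth_onD1: "smooth_on S f \<Longrightarrow> x \<in> S \<Longrightarrow> f differentiable (at x)"
  by (erule smooth_on.cases) auto

lemma smooth_onD2: "smooth_on S f \<Longrightarrow> smooth_on S (\<lambda>x. frechet_derivative f (at x) v)"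
  by (erule smooth_on.cases) auto

lemma fd_eq_open:
  assumes "open S" "x \<in> S" "\<forall>y\<in>S. f y = g y" "g differentiable (at x)"
  shows "frechet_derivative f (at x) = frechet_derivative g (at x)" "f differentiable (at x)"
proof -
  have "(g has_derivative frechet_derivative g (at x)) (at x)"
    using assms(4) frechet_derivative_works by blast
  then have "(f has_derivative frechet_derivative g (at x)) (at x)"
    by (rule has_derivative_transform_within_open[OF _ assms(1,2)]) (use assms(3) in auto)
  then show "frechet_derivative f (at x) = frechet_derivative g (at x)" "f differentiable (at x)"
    using frechet_derivative_at differentiableI by metis+
qed

lemma smooth_on_eq:
  fixes f g :: "'a::real_normed_vector \<Rightarrow> 'b::real_normed_vector"
  assumes "open S" "smooth_on S g" "\<forall>x\<in>S. f x = g x"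
  shows "smooth_on S f"
proof -
  define X where "X = (\<lambda>F::'a\<Rightarrow>'b. \<exists>G. smooth_on S G \<and> (\<forall>x\<in>S. F x = G x))"
  have "X f" using assms X_def by blast
  then show ?thesis
  proof (coinduction arbitrary: f rule: smooth_on.coinduct)
    case (smooth_on F)
    then obtain G where G: "smooth_on S G" "\<forall>x\<in>S. F x = G x" by (auto simp: X_def)
    have d: "\<forall>x\<in>S. F differentiable at x" using fd_eq_open(2)[OF assms(1) _ G(2)] smooth_onD1[OF G(1)] by blast
    have "X (\<lambda>x. frechet_derivative F (at x) v)" for v
      unfolding X_def
      by (rule exI[of _ "\<lambda>x. frechet_derivative G (at x) v"])
         (use smooth_onD2[OF G(1)] fd_eq_open(1)[OF assms(1) _ G(2)] smooth_onD1[OF G(1)] in auto)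
    then show ?case using d by blast
  qed
qed

inductive_set polyc :: "('a \<Rightarrow> real) set \<Rightarrow> ('a \<Rightarrow> real) set" for A where
  atom: "a \<in> A \<Longrightarrow> a \<in> polyc A"
| const: "(\<lambda>x. c) \<in> polyc A"
| add: "f \<in> polyc A \<Longrightarrow> g \<in> polyc A \<Longrightarrow> (\<lambda>x. f x + g x) \<in> polyc A"
| mult: "f \<in> polyc A \<Longrightarrow> g \<in> polyc A \<Longrightarrow> (\<lambda>x. f x * g x) \<in> polyc A"

lemma polyc_deriv:
  fixes A :: "('a::real_normed_vector \<Rightarrow> real) set"
  assumes diffA: "\<forall>a\<in>A. \<forall>x\<in>S. a differentiable (at x)"
    and derA: "\<forall>a\<in>A. \<forall>v. \<exists>q\<in>polyc A. \<forall>x\<in>S. frechet_derivative a (at x) v = q x"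
    and "f \<in> polyc A"
  shows "(\<forall>x\<in>S. f differentiable (at x)) \<and> (\<forall>v. \<exists>q\<in>polyc A. \<forall>x\<in>S. frechet_derivative f (at x) v = q x)"
  using assms(3)
proof induction
  case (atom a)
  then show ?case using diffA derA by blast
next
  case (const c)
  then show ?case by (auto intro!: bexI[of _ "\<lambda>x. 0"] polyc.const)
next
  case (add f g)
  have d: "\<forall>x\<in>S. (\<lambda>x. f x + g x) differentiable (at x)" using add by auto
  have "\<exists>q\<in>polyc A. \<forall>x\<in>S. frechet_derivative (\<lambda>x. f x + g x) (at x) v = q x" for v
  proof -
    obtain qf qg where q: "qf \<in> polyc A" "qg \<in> polyc A" "\<forall>x\<in>S. frechet_derivative f (at x) v = qf x"
       "\<forall>x\<in>S. frechet_derivative g (at x) v = qg x" using add by meson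
    have "frechet_derivative (\<lambda>x. f x + g x) (at x) v = qf x + qg x" if "x \<in> S" for x
    proof -
      have "((\<lambda>x. f x + g x) has_derivative (\<lambda>v. frechet_derivative f (at x) v + frechet_derivative g (at x) v)) (at x)"
        using add that by (intro has_derivative_add) (auto simp: frechet_derivative_works)
      then have "frechet_derivative (\<lambda>x. f x + g x) (at x) = (\<lambda>v. frechet_derivative f (at x) v + frechet_derivative g (at x) v)"
        by (metis frechet_derivative_at)
      then show ?thesis using q that by simp
    qed
    then show ?thesis using q by (intro bexI[of _ "\<lambda>x. qf x + qg x"] polyc.add) auto
  qed
  then show ?case using d by blast
next
  case (mult f g)
  have d: "\<forall>x\<in>S. (\<lambda>x. f x * g x) differentiable (at x)" using mult by auto
  have "\<exists>q\<in>polyc A. \<forall>x\<in>S. frechet_derivative (\<lambda>x. f x * g x) (at x) v = q x" for v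
  proof -
    obtain qf qg where q: "qf \<in> polyc A" "qg \<in> polyc A" "\<forall>x\<in>S. frechet_derivative f (at x) v = qf x"
       "\<forall>x\<in>S. frechet_derivative g (at x) v = qg x" using mult by meson
    have "frechet_derivative (\<lambda>x. f x * g x) (at x) v = f x * qg x + qf x * g x" if "x \<in> S" for x
    proof -
      have "((\<lambda>x. f x * g x) has_derivative (\<lambda>v. f x * frechet_derivative g (at x) v + frechet_derivative f (at x) v * g x)) (at x)"
        using mult that by (intro has_derivative_mult) (auto simp: frechet_derivative_works)
      then have "frechet_derivative (\<lambda>x. f x * g x) (at x) = (\<lambda>v. f x * frechet_derivative g (at x) v + frechet_derivative f (at x) v * g x)"
        by (metis frechet_derivative_at)
      then show ?thesis using q that by simp
    qed
    then show ?thesis using q mult by (intro bexI[of _ "\<lambda>x. f x * qg x + qf x * g x"] polyc.add polyc.mult) auto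
  qed
  then show ?case using d by blast
qed

lemma polyc_smooth:
  fixes A :: "('a::real_normed_vector \<Rightarrow> real) set"
  assumes S: "open S"
    and diffA: "\<forall>a\<in>A. \<forall>x\<in>S. a differentiable (at x)"
    and derA: "\<forall>a\<in>A. \<forall>v. \<exists>q\<in>polyc A. \<forall>x\<in>S. frechet_derivative a (at x) v = q x"
    and "f \<in> polyc A"
  shows "smooth_on S f"
proof -
  define X where "X = (\<lambda>F. \<exists>q\<in>polyc A. \<forall>x\<in>S. F x = q x)"
  have "X f" using assms X_def by blast
  then show ?thesis
  proof (coinduction arbitrary: f rule: smooth_on.coinduct)
    case (smooth_on F)
    then obtain q where q: "q \<in> polyc A" "\<forall>x\<in>S. F x = q x" by (auto simp: X_def)
    note pd = polyc_deriv[OF diffA derA q(1)]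
    have d: "\<forall>x\<in>S. F differentiable at x" using fd_eq_open(2)[OF S _ q(2)] pd by blast
    have "X (\<lambda>x. frechet_derivative F (at x) v)" for v
    proof -
      obtain q' where "q' \<in> polyc A" "\<forall>x\<in>S. frechet_derivative q (at x) v = q' x" using pd by blast
      then show ?thesis unfolding X_def using fd_eq_open(1)[OF S _ q(2)] pd by (intro bexI[of _ q']) auto
    qed
    then show ?case using d by blast
  qed
qed

lemma polyc_smooth0:
  fixes f :: "'a::real_normed_vector \<Rightarrow> real"
  assumes "open S" "f \<in> polyc {f. smooth_on S f}"
  shows "smooth_on S f"
proof (rule polyc_smooth[OF assms(1) _ _ assms(2)])
  show "\<forall>a\<in>{f. smooth_on S f}. \<forall>v. \<exists>q\<in>polyc {f. smooth_on S f}. \<forall>x\<in>S. frechet_derivative a (at x) v = q x"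
    by (auto intro!: bexI polyc.atom smooth_onD2)
qed (auto intro: smooth_onD1)

lemma smooth_const: "open S \<Longrightarrow> smooth_on S (\<lambda>x::'a::real_normed_vector. c::real)"
  by (rule polyc_smooth0) (auto intro: polyc.const)

lemma smooth_add: "open S \<Longrightarrow> smooth_on S f \<Longrightarrow> smooth_on S g \<Longrightarrow> smooth_on S (\<lambda>x::'a::real_normed_vector. f x + g x::real)"
  by (rule polyc_smooth0) (auto intro: polyc.add polyc.atom)

lemma smooth_mult: "open S \<Longrightarrow> smooth_on S f \<Longrightarrow> smooth_on S g \<Longrightarrow> smooth_on S (\<lambda>x::'a::real_normed_vector. f x * g x::real)"
  by (rule polyc_smooth0) (auto intro: polyc.mult polyc.atom)

lemma smooth_sum: "finite I \<Longrightarrow> open S \<Longrightarrow> (\<And>i. i \<in> I \<Longrightarrow> smooth_on S (f i)) \<Longrightarrow> smooth_on S (\<lambda>x::'a::real_normed_vector. \<Sum>i\<in>I. f i x::real)"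
  by (induction I rule: finite_induct) (auto intro: smooth_const smooth_add)

lemma hd_powr_const: fixes g :: "'a::real_normed_vector \<Rightarrow> real"
  assumes Gd: "(g has_derivative G) (at x within UNIV)" and gp: "0 < g x"
  shows "((\<lambda>x. g x powr s) has_derivative (\<lambda>h. (g x powr s) * (G h * s / g x))) (at x)"
  using has_derivative_powr[OF Gd has_derivative_const[of s] gp UNIV_I] by simp

lemma smooth_powr:
  fixes f :: "'a::real_normed_vector \<Rightarrow> real"
  assumes S: "open S" and f: "smooth_on S f" and pos: "\<forall>x\<in>S. f x > 0"
  shows "smooth_on S (\<lambda>x. f x powr r)"
proof -
  define A where "A = {f. smooth_on S f} \<union> {(\<lambda>x. f x powr r) | (f::'a\<Rightarrow>real) (r::real). smooth_on S f \<and> (\<forall>x\<in>S. f x > 0)}"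
  have memA: "(\<lambda>x. h x powr t) \<in> A" if "smooth_on S h" "\<forall>x\<in>S. h x > 0" for h t
    unfolding A_def by (rule UnI2, rule CollectI, rule exI[of _ h], rule exI[of _ t]) (use that in simp)
  have memA0: "h \<in> A" if "smooth_on S h" for h
    unfolding A_def using that by simp
  have caseA: "smooth_on S a \<or> (\<exists>g s. a = (\<lambda>x. g x powr s) \<and> smooth_on S g \<and> (\<forall>x\<in>S. g x > 0))" if "a \<in> A" for a
    using that unfolding A_def by (simp only: Un_iff mem_Collect_eq)
  have hd: "((\<lambda>x. g x powr s) has_derivative (\<lambda>h. (g x powr s) * (frechet_derivative g (at x) h * s / g x))) (at x)"
    if g: "smooth_on S g" "\<forall>x\<in>S. g x > 0" and x: "x \<in> S" for g :: "'a \<Rightarrow> real" and s :: real and x :: 'a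
  proof -
    have Gd: "(g has_derivative frechet_derivative g (at x)) (at x within UNIV)"
      using smooth_onD1[OF g(1) x] frechet_derivative_works by blast
    have gp: "0 < g x" using g(2) x by blast
    show ?thesis by (rule hd_powr_const[OF Gd gp])
  qed
  have diffA: "\<forall>a\<in>A. \<forall>x\<in>S. a differentiable (at x)"
  proof (intro ballI)
    fix a x assume a: "a \<in> A" and x: "x \<in> S"
    show "a differentiable (at x)"
    proof (cases "smooth_on S a")
      case True then show ?thesis using smooth_onD1 x by blast
    next
      case False
      then obtain g s where g: "a = (\<lambda>x. g x powr s)" "smooth_on S g" "\<forall>x\<in>S. g x > 0" using caseA[OF a] by blast
      show ?thesis unfolding g(1) using hd[OF g(2,3) x] by (rule differentiableI)
    qed
  qed
  have derA: "\<forall>a\<in>A. \<forall>v. \<exists>q\<in>polyc A. \<forall>x\<in>S. frechet_derivative a (at x) v = q x"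
  proof (intro ballI allI)
    fix a v assume a: "a \<in> A"
    show "\<exists>q\<in>polyc A. \<forall>x\<in>S. frechet_derivative a (at x) v = q x"
    proof (cases "smooth_on S a")
      case True
      have "(\<lambda>x. frechet_derivative a (at x) v) \<in> polyc A"
        by (rule polyc.atom, rule memA0, rule smooth_onD2[OF True])
      then show ?thesis by (intro bexI[of _ "\<lambda>x. frechet_derivative a (at x) v"]) auto
    next
      case False
      then obtain g s where g: "a = (\<lambda>x. g x powr s)" "smooth_on S g" "\<forall>x\<in>S. g x > 0" using caseA[OF a] by blast
      have E: "frechet_derivative a (at x) v = s * (g x powr (s - 1) * frechet_derivative g (at x) v)" if x: "x \<in> S" for x
      proof -
        have "frechet_derivative a (at x) = (\<lambda>h. (g x powr s) * (frechet_derivative g (at x) h * s / g x))"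
          unfolding g(1) using hd[OF g(2,3) x] by (metis frechet_derivative_at)
        moreover have gx: "g x > 0" using g(3) x by blast
        ultimately show ?thesis by (simp add: powr_diff field_simps)
      qed
      have P: "(\<lambda>x. s * (g x powr (s - 1) * frechet_derivative g (at x) v)) \<in> polyc A"
        by (intro polyc.mult polyc.const polyc.atom memA memA0 smooth_onD2 g(2,3))
      show ?thesis by (rule bexI[OF _ P]) (use E in blast)
    qed
  qed
  have "(\<lambda>x. f x powr r) \<in> polyc A" by (intro polyc.atom memA f pos)
  then show ?thesis by (rule polyc_smooth[OF S diffA derA])
qed

lemma smooth_linear:
  fixes L :: "'a::real_normed_vector \<Rightarrow> 'b::real_normed_vector"
  assumes "bounded_linear L"
  shows "smooth_on S L"
proof -
  define X where "X = (\<lambda>F::'a\<Rightarrow>'b. (\<exists>c. F = (\<lambda>x. c)) \<or> bounded_linear F)"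
  have "X L" using assms X_def by blast
  then show ?thesis
  proof (coinduction arbitrary: L rule: smooth_on.coinduct)
    case (smooth_on F)
    show ?case
    proof (cases "\<exists>c. F = (\<lambda>x. c)")
      case True
      then show ?thesis by (auto simp: X_def)
    next
      case False
      then have bl: "bounded_linear F" using smooth_on X_def by blast
      have "frechet_derivative F (at x) = F" for x
        using bl frechet_derivative_at[OF bounded_linear_imp_has_derivative[OF bl]] by simp
      then show ?thesis using bl bounded_linear_imp_differentiable X_def by fastforce
    qed
  qed
qed

lemma smooth_vec:
  fixes F :: "'a::real_normed_vector \<Rightarrow> real^'n"
  assumes S: "open S" and comp: "\<forall>i. smooth_on S (\<lambda>x. F x $ i)"
  shows "smooth_on S F"
proof -
  define X where "X = (\<lambda>F::'a \<Rightarrow> real^'n. \<forall>i. smooth_on S (\<lambda>x. F x $ i))"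
  have "X F" using assms X_def by blast
  then show ?thesis
  proof (coinduction arbitrary: F rule: smooth_on.coinduct)
    case (smooth_on F)
    then have c: "\<And>i. smooth_on S (\<lambda>x. F x $ i)" by (auto simp: X_def)
    have hd: "(F has_derivative (\<lambda>v. \<chi> i. frechet_derivative (\<lambda>x. F x $ i) (at x) v)) (at x)" if x: "x \<in> S" for x
    proof -
      have "((\<lambda>x. \<Sum>i\<in>UNIV. F x $ i *\<^sub>R axis i (1::real)) has_derivative
            (\<lambda>v. \<Sum>i\<in>UNIV. frechet_derivative (\<lambda>x. F x $ i) (at x) v *\<^sub>R axis i 1)) (at x)"
        by (intro has_derivative_sum has_derivative_scaleR_left)
           (use smooth_onD1[OF c x] in \<open>auto simp: frechet_derivative_works\<close>)
      moreover have "\<And>G::real^'n. (\<Sum>i\<in>UNIV. G $ i *\<^sub>R axis i 1) = G"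
        using basis_expansion by (metis scalar_mult_eq_scaleR)
      moreover have "(\<Sum>i\<in>UNIV. frechet_derivative (\<lambda>x. F x $ i) (at x) v *\<^sub>R axis i 1) =
          (\<chi> i. frechet_derivative (\<lambda>x. F x $ i) (at x) v)" for v
        using basis_expansion[of "\<chi> i. frechet_derivative (\<lambda>x. F x $ i) (at x) v"]
        by (simp add: scalar_mult_eq_scaleR)
      ultimately show ?thesis by simp
    qed
    have "X (\<lambda>x. frechet_derivative F (at x) v)" for v
      unfolding X_def
    proof
      fix i
      show "smooth_on S (\<lambda>x. frechet_derivative F (at x) v $ i)"
      proof (rule smooth_on_eq[OF S smooth_onD2[OF c[of i], of v]], intro ballI)
        fix x assume "x \<in> S"
        then have "frechet_derivative F (at x) = (\<lambda>v. \<chi> i. frechet_derivative (\<lambda>x. F x $ i) (at x) v)"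
          using hd by (metis frechet_derivative_at)
        then show "frechet_derivative F (at x) v $ i = frechet_derivative (\<lambda>x. F x $ i) (at x) v" by simp
      qed
    qed
    then show ?case using hd differentiableI by blast
  qed
qed



lemma lin_expand:
  fixes L :: "real^'n \<Rightarrow> real"
  assumes "linear L"
  shows "L v = (\<Sum>i\<in>UNIV. v$i * L (axis i 1))"
proof -
  have "L v = L (\<Sum>i\<in>UNIV. v$i *\<^sub>R axis i 1)"
    using basis_expansion[of v] by (simp add: scalar_mult_eq_scaleR)
  also have "\<dots> = (\<Sum>i\<in>UNIV. v$i * L (axis i 1))"
    using assms by (simp add: linear_sum linear_scale)
  finally show ?thesis .
qed

lemma fd_grad:
  fixes f :: "real^'n \<Rightarrow> real"
  assumes "f differentiable (at x)"
  shows "frechet_derivative f (at x) v = (\<Sum>i\<in>UNIV. v$i * grad f x $ i)"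
proof -
  have "grad f x $ i = frechet_derivative f (at x) (axis i 1)" for i
    unfolding grad_def by (rule vec_lambda_beta)
  then show ?thesis using lin_expand[OF linear_frechet_derivative[OF assms], of v] by presburger
qed

lemma euler:
  fixes f :: "real^'n \<Rightarrow> real"
  assumes hom: "pos_homogeneous1 f" and d: "f differentiable (at x)" and x: "x \<noteq> 0"
  shows "frechet_derivative f (at x) x = f x"
proof -
  have D: "(f has_derivative frechet_derivative f (at x)) (at x)" using d frechet_derivative_works by blast
  have L: "((\<lambda>s::real. x + s *\<^sub>R x) has_derivative (\<lambda>s. s *\<^sub>R x)) (at 0)"
    by (auto intro!: derivative_eq_intros)
  have "((\<lambda>s::real. f (x + s *\<^sub>R x)) has_derivative (\<lambda>s. frechet_derivative f (at x) (s *\<^sub>R x))) (at 0)"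
    using has_derivative_compose[OF L, of f] D by simp
  moreover have "((\<lambda>s::real. (1 + s) * f x) has_derivative (\<lambda>s. s * f x)) (at 0)"
    by (auto intro!: derivative_eq_intros)
  then have "((\<lambda>s::real. f (x + s *\<^sub>R x)) has_derivative (\<lambda>s. s * f x)) (at 0)"
  proof (rule has_derivative_transform_within_open[where s="{s. s > -1}"])
    show "open {s::real. s > -1}" by (simp add: open_Collect_less)
    fix s :: real assume "s \<in> {s. s > -1}"
    then have "1 + s > 0" by simp
    then show "(1 + s) * f x = f (x + s *\<^sub>R x)"
      using hom x unfolding pos_homogeneous1_def by (metis scaleR_collapse scaleR_add_left scaleR_one)
  qed simp
  ultimately have "(\<lambda>s. frechet_derivative f (at x) (s *\<^sub>R x)) = (\<lambda>s. s * f x)"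
    by (rule has_derivative_unique)
  then show ?thesis by (metis mult_1 scaleR_one)
qed

lemma fd_hom0:
  fixes f :: "real^'n \<Rightarrow> real"
  assumes hom: "pos_homogeneous1 f" and d: "\<forall>y. y \<noteq> 0 \<longrightarrow> f differentiable (at y)"
    and x: "x \<noteq> 0" and t: "t > 0"
  shows "frechet_derivative f (at (t *\<^sub>R x)) = frechet_derivative f (at x)"
proof -
  have tx: "t *\<^sub>R x \<noteq> 0" using x t by simp
  have D1: "(f has_derivative frechet_derivative f (at (t *\<^sub>R x))) (at (t *\<^sub>R x))"
    using d tx frechet_derivative_works by blast
  have D0: "(f has_derivative frechet_derivative f (at x)) (at x)"
    using d x frechet_derivative_works by blast
  have L: "((\<lambda>y. t *\<^sub>R y) has_derivative (\<lambda>v. t *\<^sub>R v)) (at x)"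
    by (auto intro!: derivative_eq_intros)
  have A: "((\<lambda>y. f (t *\<^sub>R y)) has_derivative (\<lambda>v. frechet_derivative f (at (t *\<^sub>R x)) (t *\<^sub>R v))) (at x)"
    using has_derivative_compose[OF L D1] by simp
  have "((\<lambda>y. t * f y) has_derivative (\<lambda>v. t * frechet_derivative f (at x) v)) (at x)"
    using D0 by (auto intro!: derivative_eq_intros)
  then have B: "((\<lambda>y. f (t *\<^sub>R y)) has_derivative (\<lambda>v. t * frechet_derivative f (at x) v)) (at x)"
  proof (rule has_derivative_transform_within_open[where s="-{0}"])
    fix y :: "real^'n" assume "y \<in> -{0}"
    then show "t * f y = f (t *\<^sub>R y)" using hom t unfolding pos_homogeneous1_def by auto
  qed (use x in auto)
  have "\<forall>v. frechet_derivative f (at (t *\<^sub>R x)) (t *\<^sub>R v) = t * frechet_derivative f (at x) v"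
    using has_derivative_unique[OF A B] by metis
  moreover have "linear (frechet_derivative f (at (t *\<^sub>R x)))"
    using linear_frechet_derivative d tx by blast
  ultimately have "\<forall>v. t * frechet_derivative f (at (t *\<^sub>R x)) v = t * frechet_derivative f (at x) v"
    by (simp add: linear_scale)
  then show ?thesis using t by auto
qed

lemma grad_hom0:
  fixes f :: "real^'n \<Rightarrow> real"
  assumes "pos_homogeneous1 f" "\<forall>y. y \<noteq> 0 \<longrightarrow> f differentiable (at y)" "x \<noteq> 0" "t > 0"
  shows "grad f (t *\<^sub>R x) = grad f x"
  using fd_hom0[OF assms] by (simp add: grad_def)

lemma vec_has_derivative:
  fixes F :: "'a::real_normed_vector \<Rightarrow> real^'n"
  assumes "\<forall>i. (\<lambda>x. F x $ i) differentiable (at x)"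
  shows "(F has_derivative (\<lambda>v. \<chi> i. frechet_derivative (\<lambda>x. F x $ i) (at x) v)) (at x)"
proof -
  have "((\<lambda>x. \<Sum>i\<in>UNIV. F x $ i *\<^sub>R axis i (1::real)) has_derivative
        (\<lambda>v. \<Sum>i\<in>UNIV. frechet_derivative (\<lambda>x. F x $ i) (at x) v *\<^sub>R axis i 1)) (at x)"
    by (intro has_derivative_sum has_derivative_scaleR_left)
       (use assms in \<open>auto simp: frechet_derivative_works\<close>)
  moreover have "\<And>G::real^'n. (\<Sum>i\<in>UNIV. G $ i *\<^sub>R axis i 1) = G"
    using basis_expansion by (metis scalar_mult_eq_scaleR)
  moreover have "(\<Sum>i\<in>UNIV. frechet_derivative (\<lambda>x. F x $ i) (at x) v *\<^sub>R axis i 1) =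
      (\<chi> i. frechet_derivative (\<lambda>x. F x $ i) (at x) v)" for v
    using basis_expansion[of "\<chi> i. frechet_derivative (\<lambda>x. F x $ i) (at x) v"]
    by (simp add: scalar_mult_eq_scaleR)
  ultimately show ?thesis by simp
qed

lemma sum_option_UNIV:
  fixes f :: "'n::finite option \<Rightarrow> 'b::comm_monoid_add"
  shows "(\<Sum>b\<in>UNIV. f b) = f None + (\<Sum>i\<in>UNIV. f (Some i))"
  by (simp add: UNIV_option_conv sum.reindex image_iff)

lemma det_ker:
  fixes A :: "real^'m^'m"
  assumes "det A \<noteq> 0" "A *v z = 0"
  shows "z = 0"
proof -
  obtain A' where "A' ** A = mat 1" using assms(1) invertible_det_nz invertible_def by metis
  then show ?thesis using matrix_left_invertible_ker assms(2) by metis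
qed



theorem corollary8:
  fixes p pstar :: "real^'n \<Rightarrow> real"
  assumes n2: "CARD('n) \<ge> 2"
    and p_smooth: "smooth_on (- {0}) p"
    and p_pos: "\<forall>\<xi>. \<xi> \<noteq> 0 \<longrightarrow> p \<xi> > 0"
    and p_hom: "pos_homogeneous1 p"
    and p_curv: "\<forall>\<xi>. \<xi> \<noteq> 0 \<and> p \<xi> = 1 \<longrightarrow> level_gauss_curvature p \<xi> \<noteq> 0"
    and ps_smooth: "smooth_on (- {0}) pstar"
    and ps_pos: "\<forall>\<xi>. \<xi> \<noteq> 0 \<longrightarrow> pstar \<xi> > 0"
    and ps_hom: "pos_homogeneous1 pstar"
    and ps_dual: "{\<eta>. \<eta> \<noteq> 0 \<and> pstar \<eta> = 1} = {grad p \<xi> | \<xi>. \<xi> \<noteq> 0 \<and> p \<xi> = 1}"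
  defines "\<psi> \<equiv> (\<lambda>\<xi>. p \<xi> *\<^sub>R (grad p \<xi> /\<^sub>R norm (grad p \<xi>)))"
    and "\<phi> \<equiv> (\<lambda>\<xi>. norm \<xi> *\<^sub>R grad pstar \<xi>)"
  shows "diffeo_on (- {0}) (- {0}) \<psi> \<and> (\<forall>\<eta>\<in>- {0}. \<phi> \<eta> = inv_into (- {0}) \<psi> \<eta>)"
proof -
  let ?S = "-{0} :: (real^'n) set"
  have S: "open ?S" by (simp add: open_Compl)
  have pd: "\<forall>y. y \<noteq> 0 \<longrightarrow> p differentiable (at y)" using smooth_onD1[OF p_smooth] by auto
  have psd: "\<forall>y. y \<noteq> 0 \<longrightarrow> pstar differentiable (at y)" using smooth_onD1[OF ps_smooth] by auto
  define gi where "gi i = (\<lambda>y. grad p y $ i)" for i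
  have gi_eq: "gi i = (\<lambda>y. frechet_derivative p (at y) (axis i 1))" for i
    unfolding gi_def grad_def by (simp only: vec_lambda_beta)
  have gi_smooth: "smooth_on ?S (gi i)" for i
    unfolding gi_eq by (rule smooth_onD2[OF p_smooth])
  have gi_d: "gi i differentiable (at y)" if "y \<noteq> 0" for i y
    using smooth_onD1[OF gi_smooth] that by auto
  define Hd where "Hd x i w = frechet_derivative (gi i) (at x) w" for x i w
  have Gi: "(gi i has_derivative Hd x i) (at x)" if "x \<noteq> 0" for x i
    unfolding Hd_def using gi_d[OF that] frechet_derivative_works by (metis eta_contract_eq)

  have nrm: "(1 / p \<xi>) *\<^sub>R \<xi> \<noteq> 0 \<and> p ((1 / p \<xi>) *\<^sub>R \<xi>) = 1 \<and> grad p \<xi> = grad p ((1 / p \<xi>) *\<^sub>R \<xi>)"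
    if "\<xi> \<noteq> 0" for \<xi>
  proof -
    have pp: "p \<xi> > 0" using p_pos that by auto
    define \<xi>' where "\<xi>' = (1 / p \<xi>) *\<^sub>R \<xi>"
    have nz: "\<xi>' \<noteq> 0" using pp that by (simp add: \<xi>'_def)
    have p1: "p \<xi>' = 1" using p_hom pp that unfolding pos_homogeneous1_def \<xi>'_def by simp
    have "\<xi> = p \<xi> *\<^sub>R \<xi>'" using pp by (simp add: \<xi>'_def)
    then have "grad p \<xi> = grad p \<xi>'" using grad_hom0[OF p_hom pd nz pp] by simp
    then show ?thesis using nz p1 \<xi>'_def by simp
  qed

  have F1: "grad p \<xi> \<noteq> 0 \<and> pstar (grad p \<xi>) = 1" if "\<xi> \<noteq> 0" for \<xi>
  proof -
    have "grad p ((1 / p \<xi>) *\<^sub>R \<xi>) \<in> {grad p \<xi> | \<xi>. \<xi> \<noteq> 0 \<and> p \<xi> = 1}" using nrm[OF that] by blast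
    then show ?thesis using nrm[OF that] ps_dual by auto
  qed

  have E: "(\<Sum>i\<in>UNIV. x$i * Hd x i w) = 0" if x: "x \<noteq> 0" for x w
  proof -
    have Li: "((\<lambda>y. y$i) has_derivative (\<lambda>h. h$i)) (at x)" for i :: 'n
      by (rule bounded_linear_imp_has_derivative[OF bounded_linear_vec_nth])
    have D: "((\<lambda>y. \<Sum>i\<in>UNIV. y$i * gi i y) has_derivative (\<lambda>w. \<Sum>i\<in>UNIV. x$i * Hd x i w + w$i * gi i x)) (at x)"
      by (rule has_derivative_sum, rule has_derivative_mult[OF Li Gi[OF x]])
    have "((\<lambda>y. \<Sum>i\<in>UNIV. y$i * gi i y) has_derivative frechet_derivative p (at x)) (at x)"
    proof (rule has_derivative_transform_within_open[where s="?S"])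
      show "(p has_derivative frechet_derivative p (at x)) (at x)" using pd x frechet_derivative_works by blast
      fix y :: "real^'n" assume "y \<in> ?S"
      then have "y \<noteq> 0" by simp
      then show "p y = (\<Sum>i\<in>UNIV. y$i * gi i y)"
        using euler[OF p_hom _ \<open>y \<noteq> 0\<close>] fd_grad[of p y y] pd by (simp add: gi_def)
    qed (use x S in auto)
    then have eqD: "(\<lambda>w. \<Sum>i\<in>UNIV. x$i * Hd x i w + w$i * gi i x) = frechet_derivative p (at x)"
      by (rule has_derivative_unique[OF D])
    have "(\<Sum>i\<in>UNIV. x$i * Hd x i w + w$i * gi i x) = frechet_derivative p (at x) w"
      by (rule fun_cong[OF eqD])
    also have "\<dots> = (\<Sum>i\<in>UNIV. w$i * gi i x)" using fd_grad[of p x w] pd x by (simp add: gi_def)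
    finally show ?thesis by (simp add: sum.distrib)
  qed

  have U: "(\<Sum>i\<in>UNIV. grad pstar (grad p \<xi>) $ i * Hd \<xi> i w) = 0" if x: "\<xi> \<noteq> 0" for \<xi> w
  proof -
    have G: "(grad p has_derivative (\<lambda>v. \<chi> i. Hd \<xi> i v)) (at \<xi>)"
      using vec_has_derivative[of "grad p" \<xi>] gi_d[OF x] by (simp add: gi_def Hd_def)
    have gnz: "grad p \<xi> \<noteq> 0" using F1 x by blast
    have P: "(pstar has_derivative frechet_derivative pstar (at (grad p \<xi>))) (at (grad p \<xi>))"
      using psd gnz frechet_derivative_works by blast
    have C: "((\<lambda>y. pstar (grad p y)) has_derivative (\<lambda>v. frechet_derivative pstar (at (grad p \<xi>)) (\<chi> i. Hd \<xi> i v))) (at \<xi>)"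
      using has_derivative_compose[OF G P] .
    have "((\<lambda>y. (1::real)) has_derivative (\<lambda>v. 0)) (at \<xi>)" by simp
    then have C0: "((\<lambda>y. pstar (grad p y)) has_derivative (\<lambda>v. 0)) (at \<xi>)"
    proof (rule has_derivative_transform_within_open[where s="?S"])
      fix y :: "real^'n" assume "y \<in> ?S"
      then show "1 = pstar (grad p y)" using F1 by simp
    qed (use x S in auto)
    have "frechet_derivative pstar (at (grad p \<xi>)) (\<chi> i. Hd \<xi> i w) = 0"
      using fun_cong[OF has_derivative_unique[OF C C0], of w] by (simp only:)
    then show ?thesis using fd_grad[of pstar "grad p \<xi>" "\<chi> i. Hd \<xi> i w"] psd gnz
      by (simp add: mult.commute)
  qed

  have F3: "grad pstar (grad p \<xi>) = \<xi>" if x: "\<xi> \<noteq> 0" and p1: "p \<xi> = 1" for \<xi>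
  proof -
    define g where "g = grad p \<xi>"
    define u where "u = grad pstar g"
    define w where "w = u - \<xi>"
    have gnz: "g \<noteq> 0" and ps1: "pstar g = 1" using F1[OF x] g_def by auto
    have g1: "(\<Sum>i\<in>UNIV. \<xi>$i * g$i) = 1"
      using euler[OF p_hom _ x] fd_grad[of p \<xi> \<xi>] pd x p1 g_def by simp
    have gu: "(\<Sum>i\<in>UNIV. g$i * u$i) = 1"
      using euler[OF ps_hom _ gnz] fd_grad[of pstar g g] psd gnz ps1 u_def by simp
    have gw: "(\<Sum>i\<in>UNIV. g$i * w$i) = 0"
    proof -
      have "(\<Sum>i\<in>UNIV. g$i * w$i) = (\<Sum>i\<in>UNIV. g$i * u$i) - (\<Sum>i\<in>UNIV. \<xi>$i * g$i)"
        by (simp add: w_def algebra_simps sum_subtractf)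
      then show ?thesis using g1 gu by simp
    qed
    have Hw: "(\<Sum>i\<in>UNIV. w$i * Hd \<xi> i v) = 0" for v
    proof -
      have "(\<Sum>i\<in>UNIV. w$i * Hd \<xi> i v) = (\<Sum>i\<in>UNIV. u$i * Hd \<xi> i v) - (\<Sum>i\<in>UNIV. \<xi>$i * Hd \<xi> i v)"
        by (simp add: w_def algebra_simps sum_subtractf)
      then show ?thesis using U[OF x, of v] E[OF x, of v] u_def g_def by simp
    qed
    define B where "B = bordered_hessian p \<xi>"
    define z :: "real^('n option)" where "z = (\<chi> a. case a of Some i \<Rightarrow> w$i | None \<Rightarrow> 0)"
    have Bz: "Finite_Cartesian_Product.transpose B *v z = 0"
    unfolding vec_eq_iff
    proof
      fix a :: "'n option"
      have "(Finite_Cartesian_Product.transpose B *v z) $ a = (\<Sum>b\<in>UNIV. B $ b $ a * z $ b)"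
        by (simp add: matrix_vector_mult_def transpose_def)
      also have "\<dots> = (\<Sum>i\<in>UNIV. B $ Some i $ a * w $ i)"
        by (simp add: sum_option_UNIV z_def)
      also have "\<dots> = 0"
      proof (cases a)
        case None
        then have "(\<Sum>i\<in>UNIV. B $ Some i $ a * w $ i) = (\<Sum>i\<in>UNIV. g$i * w$i)"
          by (simp add: B_def bordered_hessian_def g_def)
        then show ?thesis using gw by simp
      next
        case (Some j)
        then have "(\<Sum>i\<in>UNIV. B $ Some i $ a * w $ i) = (\<Sum>i\<in>UNIV. w$i * Hd \<xi> i (axis j 1))"
          by (simp add: B_def bordered_hessian_def hessian_def Hd_def gi_def mult.commute)
        then show ?thesis using Hw by simp
      qed
      finally show "(Finite_Cartesian_Product.transpose B *v z) $ a = 0 $ a" by simp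
    qed
    have "det B \<noteq> 0"
      using p_curv x p1 unfolding level_gauss_curvature_def B_def by auto
    then have "det (Finite_Cartesian_Product.transpose B) \<noteq> 0" by (simp add: det_transpose)
    then have "z = 0" using det_ker Bz by blast
    then have "w = 0"
    proof -
      assume z0: "z = 0"
      have "w $ i = 0" for i using arg_cong[OF z0, of "\<lambda>z. z $ Some i"] by (simp add: z_def)
      then show "w = 0" by (simp add: vec_eq_iff)
    qed
    then show ?thesis using u_def g_def w_def by simp
  qed

  have F4: "grad pstar (grad p \<xi>) = (1 / p \<xi>) *\<^sub>R \<xi>" if x: "\<xi> \<noteq> 0" for \<xi>
    using nrm[OF x] F3 by metis

  have phipsi: "\<psi> \<xi> \<noteq> 0 \<and> \<phi> (\<psi> \<xi>) = \<xi>" if x: "\<xi> \<noteq> 0" for \<xi>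
  proof -
    define g where "g = grad p \<xi>"
    have gnz: "g \<noteq> 0" using F1[OF x] g_def by auto
    have pp: "p \<xi> > 0" using p_pos x by auto
    define t where "t = p \<xi> / norm g"
    have t: "t > 0" using pp gnz t_def by simp
    have ps: "\<psi> \<xi> = t *\<^sub>R g" by (simp add: \<psi>_def g_def t_def divide_inverse_commute)
    have nz: "\<psi> \<xi> \<noteq> 0" using ps t gnz by simp
    have nps: "norm (\<psi> \<xi>) = p \<xi>" using ps t gnz pp by (simp add: t_def)
    have "grad pstar (\<psi> \<xi>) = grad pstar g" unfolding ps by (rule grad_hom0[OF ps_hom psd gnz t])
    also have "\<dots> = (1 / p \<xi>) *\<^sub>R \<xi>" using F4[OF x] g_def by simp
    finally have "\<phi> (\<psi> \<xi>) = \<xi>" using nps pp by (simp add: \<phi>_def)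
    then show ?thesis using nz by simp
  qed

  have surj: "\<exists>\<zeta>. \<zeta> \<noteq> 0 \<and> \<psi> \<zeta> = \<eta>" if e: "\<eta> \<noteq> 0" for \<eta>
  proof -
    have pe: "pstar \<eta> > 0" using ps_pos e by auto
    define \<eta>' where "\<eta>' = (1 / pstar \<eta>) *\<^sub>R \<eta>"
    have nz: "\<eta>' \<noteq> 0" using pe e by (simp add: \<eta>'_def)
    have p1: "pstar \<eta>' = 1" using ps_hom pe e unfolding pos_homogeneous1_def \<eta>'_def by simp
    have "\<eta>' \<in> {\<eta>. \<eta> \<noteq> 0 \<and> pstar \<eta> = 1}" using nz p1 by simp
    then obtain \<xi> where x: "\<xi> \<noteq> 0" "p \<xi> = 1" "grad p \<xi> = \<eta>'" using ps_dual by auto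
    define t where "t = pstar \<eta> * norm \<eta>'"
    have t: "t > 0" using pe nz t_def by simp
    define \<zeta> where "\<zeta> = t *\<^sub>R \<xi>"
    have znz: "\<zeta> \<noteq> 0" using t x by (simp add: \<zeta>_def)
    have pz: "p \<zeta> = t" using p_hom t x unfolding pos_homogeneous1_def \<zeta>_def by simp
    have gz: "grad p \<zeta> = \<eta>'" using grad_hom0[OF p_hom pd x(1) t] x by (simp add: \<zeta>_def)
    have "\<psi> \<zeta> = (t / norm \<eta>') *\<^sub>R \<eta>'" by (simp add: \<psi>_def pz gz divide_inverse_commute)
    also have "\<dots> = \<eta>" using nz pe by (simp add: t_def \<eta>'_def)
    finally show ?thesis using znz by blast
  qed

  have inj: "inj_on \<psi> ?S"
  proof (rule inj_on_inverseI[where g=\<phi>])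
    fix x :: "real^'n" assume "x \<in> ?S"
    then have "x \<noteq> 0" by simp
    then have c: "\<psi> x \<noteq> 0 \<and> \<phi> (\<psi> x) = x" by (rule phipsi)
    from c show "\<phi> (\<psi> x) = x" by (rule conjunct2)
  qed
  have img: "\<psi> ` ?S = ?S"
  proof
    show "\<psi> ` ?S \<subseteq> ?S"
    proof
      fix y assume "y \<in> \<psi> ` ?S"
      then obtain x where x: "x \<in> ?S" "y = \<psi> x" by blast
      then have "x \<noteq> 0" by simp
      then have c: "\<psi> x \<noteq> 0 \<and> \<phi> (\<psi> x) = x" by (rule phipsi)
      from c have "\<psi> x \<noteq> 0" by (rule conjunct1)
      then show "y \<in> ?S" using x by simp
    qed
    show "?S \<subseteq> \<psi> ` ?S"
    proof
      fix \<eta> assume "\<eta> \<in> ?S"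
      then obtain \<zeta> where "\<zeta> \<noteq> 0" "\<psi> \<zeta> = \<eta>" using surj by auto
      then show "\<eta> \<in> \<psi> ` ?S" by force
    qed
  qed
  have bij: "bij_betw \<psi> ?S ?S" using inj img by (simp add: bij_betw_def)
  have inv: "\<phi> \<eta> = inv_into ?S \<psi> \<eta>" if e: "\<eta> \<in> ?S" for \<eta>
  proof -
    have "\<eta> \<noteq> 0" using e by simp
    then obtain \<zeta> where z: "\<zeta> \<noteq> 0" "\<psi> \<zeta> = \<eta>" using surj by blast
    have "inv_into ?S \<psi> \<eta> = \<zeta>" using inv_into_f_f[OF inj, of \<zeta>] z by simp
    moreover have "\<phi> \<eta> = \<zeta>" using phipsi[OF z(1)] z by simp
    ultimately show ?thesis by simp
  qed

  define N where "N y = (\<Sum>j\<in>UNIV. gi j y * gi j y)" for y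
  have Ns: "smooth_on ?S N" unfolding N_def
    by (rule smooth_sum) (auto intro: smooth_mult gi_smooth S)
  have ng: "norm (grad p y) = sqrt (N y)" for y
    by (simp add: norm_eq_sqrt_inner inner_vec_def N_def gi_def)
  have Npos: "N y > 0" if "y \<in> ?S" for y
  proof -
    have "grad p y \<noteq> 0" using F1 that by auto
    then have "norm (grad p y) > 0" by simp
    then show ?thesis using ng by simp
  qed
  have psi_comp: "\<psi> y $ i = p y * (N y powr (-(1/2)) * gi i y)" if "y \<in> ?S" for y i
  proof -
    have "N y powr (-(1/2)) = inverse (N y powr (1/2))" by (rule powr_minus)
    also have "N y powr (1/2) = sqrt (N y)" using Npos[OF that] by (simp add: powr_half_sqrt)
    finally have h: "N y powr (-(1/2)) = inverse (sqrt (N y))" .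
    have "\<psi> y $ i = p y * (grad p y $ i / norm (grad p y))" by (simp add: \<psi>_def divide_inverse mult.commute mult.left_commute)
    also have "\<dots> = p y * (inverse (sqrt (N y)) * gi i y)" unfolding ng gi_def by (simp add: divide_inverse mult.commute)
    finally show ?thesis unfolding h .
  qed
  have psi_s: "smooth_on ?S \<psi>"
  proof (rule smooth_vec[OF S], intro allI)
    fix i
    have "smooth_on ?S (\<lambda>y. p y * (N y powr (-(1/2)) * gi i y))"
      by (intro smooth_mult smooth_powr S p_smooth Ns gi_smooth) (use Npos in auto)
    then show "smooth_on ?S (\<lambda>y. \<psi> y $ i)"
      by (rule smooth_on_eq[OF S]) (use psi_comp in auto)
  qed

  define M where "M y = (\<Sum>j\<in>UNIV. y $ j * y $ j)" for y :: "real^'n"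
  have Ms: "smooth_on ?S M" unfolding M_def
    by (rule smooth_sum[OF finite S], rule smooth_mult[OF S smooth_linear[OF bounded_linear_vec_nth] smooth_linear[OF bounded_linear_vec_nth]])
  have Mpos: "M y > 0" if "y \<in> ?S" for y
  proof -
    have "norm y > 0" using that by simp
    moreover have "norm y = sqrt (M y)" by (simp add: norm_eq_sqrt_inner inner_vec_def M_def)
    ultimately show ?thesis by simp
  qed
  have phi_comp: "\<phi> y $ i = M y powr (1/2) * frechet_derivative pstar (at y) (axis i 1)" if "y \<in> ?S" for y i
  proof -
    have "M y powr (1/2) = norm y"
      using Mpos[OF that] by (simp add: powr_half_sqrt norm_eq_sqrt_inner inner_vec_def M_def)
    then show ?thesis by (simp add: \<phi>_def grad_def)
  qed
  have phi_s: "smooth_on ?S \<phi>"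
  proof (rule smooth_vec[OF S], intro allI)
    fix i
    have "smooth_on ?S (\<lambda>y. M y powr (1/2) * frechet_derivative pstar (at y) (axis i 1))"
      by (intro smooth_mult smooth_powr S Ms smooth_onD2[OF ps_smooth]) (use Mpos in auto)
    then show "smooth_on ?S (\<lambda>y. \<phi> y $ i)"
      by (rule smooth_on_eq[OF S]) (use phi_comp in auto)
  qed
  have inv_s: "smooth_on ?S (inv_into ?S \<psi>)"
    by (rule smooth_on_eq[OF S phi_s]) (use inv in auto)
  show ?thesis
    unfolding diffeo_on_def using bij psi_s inv_s inv by blast
qed

end
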